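(* Let $l$ be a (random) convex and differentiable loss function on $\mathbb{R}^p$, let $\lambda_1\ge\dots\ge\lambda_p\ge 0$ be arbitrary, and let $\hat b$ be a minimizer of $l(b)+\sum_{i=1}^p\lambda_i|b|_{(i)}$. Let $b^0\in\mathbb{R}^p$ be a fixed vector with support $S=\{j:b^0_j\neq 0\}$ and $S^c=\{1,\dots,p\}\setminus S$. Then for any $a>0$, $$FDR=\sum_{r=1}^p\frac1r\sum_{i\in S^c}P\big(|T_i(a)|>\lambda_r,\ T(a)\in H_r\big).$$
   Context: $|w|_{(1)}\ge\dots\ge|w|_{(p)}$ are the ordered absolute values of $w\in\mathbb{R}^p$. $U(b)=-\nabla l(b)$ and $T(a)=U(\hat b)+a\hat b$. $FDR=\mathbb{E}(V/(R\vee1))$ with $V=\#\{j:b^0_j=0,\hat b_j\neq0\}$ and $R=\#\{j:\hat b_j\neq0\}$. For $r\in\{1,\dots,p\}$, $$H_r=\Big\{w\in\mathbb{R}^p:\ \forall_{j\le r}\ \sum_{i=j}^r\lambda_i<\sum_{i=j}^r|w|_{(i)}\ \text{ and }\ \forall_{j\ge r+1}\ \sum_{i=r+1}^j\lambda_i\ge\sum_{i=r+1}^j|w|_{(i)}\Big\}.$$ *)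

theory Defs
  imports "HOL-Probability.Probability"
begin

text \<open>Ordered absolute values: ord_abs w i = |w|_(i) for i in 1..p (p = CARD('n)),
  with |w|_(1) >= ... >= |w|_(p).\<close>
definition ord_abs :: "real^'n \<Rightarrow> nat \<Rightarrow> real" where
  "ord_abs w i =
     rev (sorted_list_of_multiset (image_mset (\<lambda>j. \<bar>w $ j\<bar>) (mset_set (UNIV :: 'n set)))) ! (i - 1)"

definition slope_pen :: "(nat \<Rightarrow> real) \<Rightarrow> real^'n \<Rightarrow> real" where
  "slope_pen lam b = (\<Sum>i=1..CARD('n). lam i * ord_abs b i)"

definition H_set :: "(nat \<Rightarrow> real) \<Rightarrow> nat \<Rightarrow> (real^'n) set" where
  "H_set lam r = {w.
     (\<forall>j\<in>{1..r}. (\<Sum>i=j..r. lam i) < (\<Sum>i=j..r. ord_abs w i)) \<and>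
     (\<forall>j\<in>{r+1..CARD('n)}. (\<Sum>i=r+1..j. lam i) \<ge> (\<Sum>i=r+1..j. ord_abs w i))}"

end

theory Submission
  imports Defs
begin


definition sorts :: "(nat \<Rightarrow> 'n::finite) \<Rightarrow> real^'n \<Rightarrow> bool" where
  "sorts \<sigma> w \<longleftrightarrow> bij_betw \<sigma> {1..CARD('n)} UNIV \<and>
     (\<forall>i j. 1 \<le> i \<longrightarrow> i \<le> j \<longrightarrow> j \<le> CARD('n) \<longrightarrow> \<bar>w $ \<sigma> j\<bar> \<le> \<bar>w $ \<sigma> i\<bar>)"

lemma sort_exists_gen:
  fixes f :: "'a \<Rightarrow> real"
  shows "finite X \<Longrightarrow> card X = n \<Longrightarrow> \<exists>\<sigma>. bij_betw \<sigma> {1..n} X \<and>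
     (\<forall>i j. 1 \<le> i \<longrightarrow> i \<le> j \<longrightarrow> j \<le> n \<longrightarrow> f (\<sigma> j) \<le> f (\<sigma> i))"
proof (induction n arbitrary: X)
  case 0
  then show ?case by (auto simp: bij_betw_def)
next
  case (Suc n)
  then have ne: "X \<noteq> {}" by auto
  have "Min (f ` X) \<in> f ` X" using Suc.prems ne by (intro Min_in) auto
  then obtain x where x: "x \<in> X" "f x = Min (f ` X)" by auto
  have xmin: "\<And>y. y \<in> X \<Longrightarrow> f x \<le> f y" using x Suc.prems by auto
  have "card (X - {x}) = n" using Suc.prems x by auto
  then obtain \<sigma> where s: "bij_betw \<sigma> {1..n} (X - {x})"
    and m: "\<forall>i j. 1 \<le> i \<longrightarrow> i \<le> j \<longrightarrow> j \<le> n \<longrightarrow> f (\<sigma> j) \<le> f (\<sigma> i)"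
    using Suc.IH[of "X - {x}"] Suc.prems by auto
  define \<tau> where "\<tau> = \<sigma>(Suc n := x)"
  have eq: "{1..Suc n} = insert (Suc n) {1..n}" by auto
  have b1: "bij_betw \<tau> {1..n} (X - {x})"
    using s by (rule bij_betw_cong[THEN iffD1, rotated]) (auto simp: \<tau>_def)
  have "bij_betw \<tau> ({1..n} \<union> {Suc n}) ((X - {x}) \<union> {\<tau> (Suc n)})"
    using b1 by (intro notIn_Un_bij_betw) (auto simp: \<tau>_def)
  moreover have "{1..n} \<union> {Suc n} = {1..Suc n}" "(X - {x}) \<union> {\<tau> (Suc n)} = X"
    using x(1) by (auto simp: \<tau>_def)
  ultimately have "bij_betw \<tau> {1..Suc n} X" by simp
  moreover have "\<forall>i j. 1 \<le> i \<longrightarrow> i \<le> j \<longrightarrow> j \<le> Suc n \<longrightarrow> f (\<tau> j) \<le> f (\<tau> i)"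
  proof (intro allI impI)
    fix i j assume h: "1 \<le> i" "i \<le> j" "j \<le> Suc n"
    show "f (\<tau> j) \<le> f (\<tau> i)"
    proof (cases "j = Suc n")
      case True
      then show ?thesis
      proof (cases "i = Suc n")
        case False
        then have "\<sigma> i \<in> X" using s h by (auto simp: bij_betw_def)
        then show ?thesis using True False xmin by (auto simp: \<tau>_def)
      qed (simp)
    next
      case False
      then show ?thesis using m h by (auto simp: \<tau>_def)
    qed
  qed
  ultimately show ?case by blast
qed

lemma sorts_exists: "\<exists>\<sigma>. sorts \<sigma> (w::real^'n)"
  using sort_exists_gen[of "UNIV::'n set" "CARD('n)" "\<lambda>j. \<bar>w $ j\<bar>"]
  by (auto simp: sorts_def)

lemma ord_abs_sorts:
  assumes "sorts \<sigma> w" "1 \<le> i" "i \<le> CARD('n)"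
  shows "ord_abs (w::real^'n) i = \<bar>w $ \<sigma> i\<bar>"
proof -
  define L where "L = map (\<lambda>i. \<bar>w $ \<sigma> i\<bar>) [1..<CARD('n)+1]"
  have bij: "bij_betw \<sigma> {1..CARD('n)} UNIV" using assms(1) by (simp add: sorts_def)
  have "mset L = image_mset (\<lambda>i. \<bar>w $ \<sigma> i\<bar>) (mset_set {1..<CARD('n)+1})"
    by (simp only: L_def mset_map mset_upt)
  also have "\<dots> = image_mset (\<lambda>j. \<bar>w $ j\<bar>) (image_mset \<sigma> (mset_set {1..<CARD('n)+1}))"
    by (simp add: image_mset.compositionality o_def)
  also have "image_mset \<sigma> (mset_set {1..<CARD('n)+1}) = mset_set (UNIV::'n set)"
    using bij by (subst image_mset_mset_set) (auto simp: bij_betw_def atLeastLessThanSuc_atLeastAtMost)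
  finally have ms: "mset (rev L) = image_mset (\<lambda>j. \<bar>w $ j\<bar>) (mset_set (UNIV :: 'n set))" by simp
  have len: "length L = CARD('n)" by (simp add: L_def)
  have nth: "\<And>k. k < CARD('n) \<Longrightarrow> L ! k = \<bar>w $ \<sigma> (Suc k)\<bar>"
    by (simp add: L_def del: upt_Suc)
  have "sorted_wrt (\<lambda>x y. y \<le> x) L"
    unfolding sorted_wrt_iff_nth_less len
  proof (intro allI impI)
    fix i j assume "i < j" "j < CARD('n)"
    then show "L ! j \<le> L ! i" using assms(1) nth[of i] nth[of j] unfolding sorts_def by auto
  qed
  then have "sorted (rev L)" by (simp add: sorted_wrt_rev)
  then have "rev (sorted_list_of_multiset (image_mset (\<lambda>j. \<bar>w $ j\<bar>) (mset_set (UNIV :: 'n set)))) = L"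
  proof -
    have "sorted_list_of_multiset (image_mset (\<lambda>j. \<bar>w $ j\<bar>) (mset_set (UNIV :: 'n set)))
        = sorted_list_of_multiset (mset (rev L))" by (simp only: ms)
    also have "\<dots> = rev L" by (simp only: sorted_list_of_multiset_mset sorted_sort_id[OF \<open>sorted (rev L)\<close>])
    finally show ?thesis by simp
  qed
  then show ?thesis using assms(2,3) nth[of "i-1"] by (simp add: ord_abs_def)
qed



lemma slope_pen_sorts:
  assumes "sorts \<sigma> w"
  shows "slope_pen lam (w::real^'n) = (\<Sum>i=1..CARD('n). lam i * \<bar>w $ \<sigma> i\<bar>)"
  unfolding slope_pen_def using ord_abs_sorts[OF assms] by (intro sum.cong) auto

lemma top_sum:
  fixes f :: "nat \<Rightarrow> real"
  assumes mono: "\<And>i j. 1 \<le> i \<Longrightarrow> i \<le> j \<Longrightarrow> j \<le> n \<Longrightarrow> f j \<le> f i"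
    and P: "P \<subseteq> {1..n}"
  shows "sum f P \<le> (\<Sum>i=1..card P. f i)"
proof -
  define k where "k = card P"
  define K where "K = {1..k}"
  have fP: "finite P" using P finite_subset by blast
  have kn: "k \<le> n" using card_mono[OF _ P] by (simp add: k_def)
  have cK: "card K = k" by (simp add: K_def)
  have c1: "card (P - K) = card (K - P)"
  proof -
    have "card (P - K) = card P - card (P \<inter> K)" using fP by (simp add: card_Diff_subset_Int)
    moreover have "card (K - P) = card K - card (K \<inter> P)" by (simp add: K_def card_Diff_subset_Int)
    ultimately show ?thesis by (simp add: cK k_def Int_commute)
  qed
  have s1: "sum f P = sum f (P - K) + sum f (P \<inter> K)"
    using fP by (metis sum.Int_Diff add.commute)
  have s2: "sum f K = sum f (K - P) + sum f (P \<inter> K)"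
    by (metis K_def finite_atLeastAtMost sum.Int_Diff add.commute Int_commute)
  show ?thesis
  proof (cases "P - K = {}")
    case True
    have "card (K - P) = 0" using c1 True by simp
    then have "K - P = {}" by (simp add: K_def)
    then have "P = K" using True by blast
    then show ?thesis by (simp add: K_def k_def)
  next
    case False
    then obtain i0 where "i0 \<in> P - K" by auto
    then have "P \<noteq> {}" by auto
    then have k1: "1 \<le> k" using fP by (simp add: k_def Suc_le_eq card_gt_0_iff)
    have a: "sum f (P - K) \<le> of_nat (card (P - K)) * f k"
    proof (rule sum_bounded_above)
      fix i assume "i \<in> P - K"
      then have "k \<le> i" "i \<le> n" using P by (auto simp: K_def)
      then show "f i \<le> f k" using mono k1 by auto
    qed
    have b: "of_nat (card (K - P)) * f k \<le> sum f (K - P)"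
    proof (rule sum_bounded_below)
      fix i assume "i \<in> K - P"
      then have "1 \<le> i" "i \<le> k" by (auto simp: K_def)
      then show "f k \<le> f i" using mono kn by auto
    qed
    show ?thesis using a b c1 s1 s2 by (simp add: K_def k_def)
  qed
qed

lemma sorts_bij: "sorts \<sigma> (w::real^'n) \<Longrightarrow> bij_betw \<sigma> {1..CARD('n)} UNIV"
  by (simp add: sorts_def)

lemma setsum_le:
  assumes "sorts \<sigma> (w::real^'n)"
  shows "(\<Sum>j\<in>B. \<bar>w $ j\<bar>) \<le> (\<Sum>i=1..card B. \<bar>w $ \<sigma> i\<bar>)"
proof -
  define P where "P = {i\<in>{1..CARD('n)}. \<sigma> i \<in> B}"
  have bij: "bij_betw \<sigma> {1..CARD('n)} UNIV" using assms by (simp add: sorts_def)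
  have inj: "inj_on \<sigma> P" using bij unfolding bij_betw_def by (rule conjE) (erule inj_on_subset, auto simp: P_def)
  have im: "\<sigma> ` P = B"
  proof
    show "\<sigma> ` P \<subseteq> B" by (auto simp: P_def)
    show "B \<subseteq> \<sigma> ` P"
    proof
      fix j assume j: "j \<in> B"
      have "j \<in> \<sigma> ` {1..CARD('n)}" using bij by (simp add: bij_betw_def)
      then obtain i where "i \<in> {1..CARD('n)}" "j = \<sigma> i" by blast
      then show "j \<in> \<sigma> ` P" using j by (auto simp: P_def)
    qed
  qed
  have "(\<Sum>j\<in>B. \<bar>w $ j\<bar>) = (\<Sum>i\<in>P. \<bar>w $ \<sigma> i\<bar>)"
    using sum.reindex[OF inj, of "\<lambda>j. \<bar>w $ j\<bar>"] im by simp
  also have "\<dots> \<le> (\<Sum>i=1..card P. \<bar>w $ \<sigma> i\<bar>)"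
  proof (rule top_sum[where n="CARD('n)"])
    fix i j assume "1 \<le> i" "i \<le> j" "j \<le> CARD('n)"
    then show "\<bar>w $ \<sigma> j\<bar> \<le> \<bar>w $ \<sigma> i\<bar>" using assms unfolding sorts_def by blast
  qed (auto simp: P_def)
  also have "card P = card B" using card_image[OF inj] im by simp
  finally show ?thesis .
qed

lemma sum_first:
  assumes "bij_betw \<sigma> {1..CARD('n)} (UNIV::'n set)" "k \<le> CARD('n)"
  shows "(\<Sum>i=1..k. f (\<sigma> i)) = (\<Sum>j\<in>\<sigma> ` {1..k}. f j)"
    and "card (\<sigma> ` {1..k}) = k"
proof -
  have "inj_on \<sigma> {1..k}" using assms(2) by (intro inj_on_subset[OF bij_betw_imp_inj_on[OF assms(1)]]) auto
  then show "(\<Sum>i=1..k. f (\<sigma> i)) = (\<Sum>j\<in>\<sigma> ` {1..k}. f j)"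
    and "card (\<sigma> ` {1..k}) = k" by (simp_all add: sum.reindex card_image)
qed

lemma abel:
  fixes l x :: "nat \<Rightarrow> real"
  shows "(\<Sum>i=1..n. l i * x i) = (\<Sum>k=1..n. (l k - l (Suc k)) * (\<Sum>i=1..k. x i)) + l (Suc n) * (\<Sum>i=1..n. x i)"
  by (induction n) (simp_all add: algebra_simps)

lemma abel_compare:
  fixes l x y :: "nat \<Rightarrow> real"
  assumes mono: "\<And>i j. 1 \<le> i \<Longrightarrow> i \<le> j \<Longrightarrow> j \<le> n \<Longrightarrow> l j \<le> l i"
    and le: "\<And>k. 1 \<le> k \<Longrightarrow> k < n \<Longrightarrow> (\<Sum>i=1..k. x i) \<le> (\<Sum>i=1..k. y i)"
    and eq: "(\<Sum>i=1..n. x i) = (\<Sum>i=1..n. y i)"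
  shows "(\<Sum>i=1..n. l i * x i) \<le> (\<Sum>i=1..n. l i * y i)"
proof -
  have "(\<Sum>k=1..n. (l k - l (Suc k)) * (\<Sum>i=1..k. x i)) \<le> (\<Sum>k=1..n. (l k - l (Suc k)) * (\<Sum>i=1..k. y i))"
  proof (rule sum_mono)
    fix k assume k: "k \<in> {1..n}"
    show "(l k - l (Suc k)) * (\<Sum>i=1..k. x i) \<le> (l k - l (Suc k)) * (\<Sum>i=1..k. y i)"
    proof (cases "k = n")
      case True then show ?thesis using eq by simp
    next
      case False
      then have "k < n" using k by auto
      then show ?thesis using mono[of k "Suc k"] le[of k] k by (intro mult_left_mono) auto
    qed
  qed
  then show ?thesis by (simp only: abel[of l x n] abel[of l y n] eq)
qed

lemma rearr:
  assumes mono: "\<And>i j. 1 \<le> i \<Longrightarrow> i \<le> j \<Longrightarrow> j \<le> CARD('n) \<Longrightarrow> lam j \<le> lam i"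
    and pi: "bij_betw \<pi> {1..CARD('n)} (UNIV::'n set)"
  shows "(\<Sum>i=1..CARD('n). lam i * \<bar>w $ \<pi> i\<bar>) \<le> slope_pen lam (w::real^'n)"
proof -
  obtain \<sigma> where s: "sorts \<sigma> w" using sorts_exists by blast
  have pis: "sorts \<pi> (0::real^'n)" using pi by (simp add: sorts_def)
  have "(\<Sum>i=1..CARD('n). lam i * \<bar>w $ \<pi> i\<bar>) \<le> (\<Sum>i=1..CARD('n). lam i * \<bar>w $ \<sigma> i\<bar>)"
  proof (rule abel_compare[OF mono])
    fix k assume k: "1 \<le> k" "k < CARD('n)"
    have "(\<Sum>i=1..k. \<bar>w $ \<pi> i\<bar>) = (\<Sum>j\<in>\<pi> ` {1..k}. \<bar>w $ j\<bar>)" "card (\<pi> ` {1..k}) = k"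
      using sum_first[OF pi, of k] k by auto
    then show "(\<Sum>i=1..k. \<bar>w $ \<pi> i\<bar>) \<le> (\<Sum>i=1..k. \<bar>w $ \<sigma> i\<bar>)"
      using setsum_le[OF s, of "\<pi> ` {1..k}"] by simp
  next
    have "(\<Sum>i=1..CARD('n). \<bar>w $ \<pi> i\<bar>) = (\<Sum>j\<in>UNIV. \<bar>w $ j\<bar>)"
      using sum_first(1)[OF pi, of "CARD('n)"] pi by (simp add: bij_betw_def)
    moreover have "(\<Sum>i=1..CARD('n). \<bar>w $ \<sigma> i\<bar>) = (\<Sum>j\<in>UNIV. \<bar>w $ j\<bar>)"
      using sum_first(1)[OF sorts_bij[OF s], of "CARD('n)"] s by (simp add: sorts_def bij_betw_def)
    ultimately show "(\<Sum>i=1..CARD('n). \<bar>w $ \<pi> i\<bar>) = (\<Sum>i=1..CARD('n). \<bar>w $ \<sigma> i\<bar>)" by simp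
  qed auto
  then show ?thesis using slope_pen_sorts[OF s] by simp
qed

lemma J_add:
  assumes mono: "\<And>i j. 1 \<le> i \<Longrightarrow> i \<le> j \<Longrightarrow> j \<le> CARD('n) \<Longrightarrow> lam j \<le> lam i"
    and nn: "\<And>i. 1 \<le> i \<Longrightarrow> i \<le> CARD('n) \<Longrightarrow> 0 \<le> lam i"
  shows "slope_pen lam (u + v :: real^'n) \<le> slope_pen lam u + slope_pen lam v"
proof -
  obtain \<sigma> where s: "sorts \<sigma> (u+v)" using sorts_exists by blast
  have "slope_pen lam (u+v) = (\<Sum>i=1..CARD('n). lam i * \<bar>(u+v) $ \<sigma> i\<bar>)" by (rule slope_pen_sorts[OF s])
  also have "\<dots> \<le> (\<Sum>i=1..CARD('n). lam i * \<bar>u $ \<sigma> i\<bar>) + (\<Sum>i=1..CARD('n). lam i * \<bar>v $ \<sigma> i\<bar>)"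
    unfolding sum.distrib[symmetric]
  proof (rule sum_mono)
    fix i assume i: "i \<in> {1..CARD('n)}"
    have "\<bar>(u+v) $ \<sigma> i\<bar> \<le> \<bar>u $ \<sigma> i\<bar> + \<bar>v $ \<sigma> i\<bar>" by (simp add: abs_triangle_ineq)
    then have "lam i * \<bar>(u+v) $ \<sigma> i\<bar> \<le> lam i * (\<bar>u $ \<sigma> i\<bar> + \<bar>v $ \<sigma> i\<bar>)"
      using nn i by (intro mult_left_mono) auto
    then show "lam i * \<bar>(u+v) $ \<sigma> i\<bar> \<le> lam i * \<bar>u $ \<sigma> i\<bar> + lam i * \<bar>v $ \<sigma> i\<bar>"
      by (simp add: distrib_left)
  qed
  also have "\<dots> \<le> slope_pen lam u + slope_pen lam v"
    using rearr[OF mono sorts_bij[OF s]] by (intro add_mono) auto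
  finally show ?thesis .
qed

lemma J_scale:
  assumes "0 \<le> c"
  shows "slope_pen lam (c *\<^sub>R w :: real^'n) = c * slope_pen lam w"
proof -
  obtain \<sigma> where s: "sorts \<sigma> w" using sorts_exists by blast
  have s2: "sorts \<sigma> (c *\<^sub>R w)" using s assms by (auto simp: sorts_def abs_mult intro: mult_left_mono)
  have "(\<Sum>i=1..CARD('n). lam i * \<bar>(c *\<^sub>R w) $ \<sigma> i\<bar>) = (\<Sum>i=1..CARD('n). c * (lam i * \<bar>w $ \<sigma> i\<bar>))"
    using assms by (intro sum.cong) (auto simp: abs_mult)
  then show ?thesis
    by (simp only: slope_pen_sorts[OF s] slope_pen_sorts[OF s2] sum_distrib_left)
qed

lemma downclosed:
  assumes "P \<subseteq> {1..(n::nat)}" "\<And>i i'. i \<in> P \<Longrightarrow> 1 \<le> i' \<Longrightarrow> i' \<le> i \<Longrightarrow> i' \<in> P"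
  shows "P = {1..card P}"
proof (cases "P = {}")
  case True then show ?thesis by simp
next
  case False
  have fP: "finite P" using assms(1) finite_subset by blast
  define m where "m = Max P"
  have "m \<in> P" using False fP by (simp add: m_def)
  have "P = {1..m}"
  proof
    show "P \<subseteq> {1..m}"
    proof
      fix i assume i: "i \<in> P"
      then have "1 \<le> i" using assms(1) by auto
      moreover have "i \<le> m" unfolding m_def using Max_ge[OF fP i] .
      ultimately show "i \<in> {1..m}" by simp
    qed
    show "{1..m} \<subseteq> P" using assms(2)[OF \<open>m \<in> P\<close>] by auto
  qed
  then show ?thesis by simp
qed

lemma sorts_level:
  assumes "sorts \<sigma> (w::real^'n)"
  shows "{i\<in>{1..CARD('n)}. c < \<bar>w $ \<sigma> i\<bar>} = {1..card {j. c < \<bar>w $ j\<bar>}}"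
proof -
  define P where "P = {i\<in>{1..CARD('n)}. c < \<bar>w $ \<sigma> i\<bar>}"
  have bij: "bij_betw \<sigma> {1..CARD('n)} UNIV" using assms by (simp add: sorts_def)
  have inj: "inj_on \<sigma> P" using bij unfolding bij_betw_def by (rule conjE) (erule inj_on_subset, auto simp: P_def)
  have im: "\<sigma> ` P = {j. c < \<bar>w $ j\<bar>}"
  proof
    show "\<sigma> ` P \<subseteq> {j. c < \<bar>w $ j\<bar>}" by (auto simp: P_def)
    show "{j. c < \<bar>w $ j\<bar>} \<subseteq> \<sigma> ` P"
    proof
      fix j assume j: "j \<in> {j. c < \<bar>w $ j\<bar>}"
      have "j \<in> \<sigma> ` {1..CARD('n)}" using bij by (simp add: bij_betw_def)
      then obtain i where "i \<in> {1..CARD('n)}" "j = \<sigma> i" by blast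
      then show "j \<in> \<sigma> ` P" using j by (auto simp: P_def)
    qed
  qed
  have "P = {1..card P}"
  proof (rule downclosed)
    show "P \<subseteq> {1..CARD('n)}" by (auto simp: P_def)
    fix i i' assume h: "i \<in> P" "1 \<le> i'" "i' \<le> i"
    then have h2: "i \<le> CARD('n)" "c < \<bar>w $ \<sigma> i\<bar>" by (auto simp: P_def)
    have "\<bar>w $ \<sigma> i\<bar> \<le> \<bar>w $ \<sigma> i'\<bar>" using assms h h2 unfolding sorts_def by blast
    then show "i' \<in> P" using h h2 by (auto simp: P_def)
  qed
  moreover have "card P = card {j. c < \<bar>w $ j\<bar>}" using card_image[OF inj] im by simp
  ultimately show ?thesis by (simp add: P_def)
qed



lemma first_order:
  fixes f :: "real^'n \<Rightarrow> real"
  assumes d: "(f has_derivative (\<lambda>h. g \<bullet> h)) (at b)"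
    and le: "\<And>t. 0 < t \<Longrightarrow> t < 1 \<Longrightarrow> f b - f (b + t *\<^sub>R d) \<le> t * c"
  shows "- (g \<bullet> d) \<le> c"
proof -
  have d1: "((\<lambda>t. b + t *\<^sub>R d) has_derivative (\<lambda>t. t *\<^sub>R d)) (at 0)"
    by (auto intro!: derivative_eq_intros)
  have d': "(f has_derivative (\<lambda>h. g \<bullet> h)) (at ((\<lambda>t. b + t *\<^sub>R d) 0))" using d by simp
  have "((f \<circ> (\<lambda>t. b + t *\<^sub>R d)) has_derivative ((\<lambda>h. g \<bullet> h) \<circ> (\<lambda>t. t *\<^sub>R d))) (at 0)"
    by (rule diff_chain_at[OF d1 d'])
  moreover have "((\<lambda>h. g \<bullet> h) \<circ> (\<lambda>t. t *\<^sub>R d)) = (\<lambda>t. (g \<bullet> d) * t)"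
    by (auto simp: fun_eq_iff)
  ultimately have "((\<lambda>t. f (b + t *\<^sub>R d)) has_field_derivative (g \<bullet> d)) (at 0)"
    unfolding has_field_derivative_def by (simp add: o_def)
  then have lim: "((\<lambda>h. (f (b + h *\<^sub>R d) - f b) / h) \<longlongrightarrow> g \<bullet> d) (at 0)"
    by (simp add: DERIV_def)
  then have lim2: "((\<lambda>h. (f (b + h *\<^sub>R d) - f b) / h) \<longlongrightarrow> g \<bullet> d) (at_right 0)"
    by (rule tendsto_mono[rotated]) (simp add: at_le)
  have ev: "eventually (\<lambda>h. -c \<le> (f (b + h *\<^sub>R d) - f b) / h) (at_right (0::real))"
    unfolding eventually_at_right_field
  proof (intro exI[of _ 1] conjI allI impI)
    fix h :: real assume h: "0 < h" "h < 1"
    then have "f b - f (b + h *\<^sub>R d) \<le> h * c" by (rule le)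
    then show "-c \<le> (f (b + h *\<^sub>R d) - f b) / h" using h by (simp add: le_divide_eq algebra_simps)
  qed simp_all
  have "-c \<le> g \<bullet> d" by (rule tendsto_lowerbound[OF lim2 ev]) simp
  then show ?thesis by simp
qed



lemma sum_split_nat:
  fixes f :: "nat \<Rightarrow> real"
  assumes "1 \<le> j" "j \<le> Suc r"
  shows "(\<Sum>i=1..r. f i) = (\<Sum>i=1..j-1. f i) + (\<Sum>i=j..r. f i)"
proof -
  have "{1..r} = {1..j-1} \<union> {j..r}" using assms by auto
  moreover have "{1..j-1} \<inter> {j..r} = {}" by auto
  ultimately show ?thesis by (simp add: sum.union_disjoint)
qed

lemma Lam_Suc: "(\<Sum>i=1..Suc k. f i) = (\<Sum>i=1..k. f i) + (f (Suc k) :: real)"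
  by simp

lemma H_unique:
  fixes y :: "real^'n"
  assumes "y \<in> H_set lam r" "y \<in> H_set lam s" "r \<in> {1..CARD('n)}" "s \<in> {1..CARD('n)}"
  shows "r = s"
proof -
  have *: False if "y \<in> H_set lam r" "y \<in> H_set lam s" "r \<in> {1..CARD('n)}" "s \<in> {1..CARD('n)}" "s < r"
    for r s :: nat
  proof -
    have "(\<Sum>i=s+1..r. lam i) \<ge> (\<Sum>i=s+1..r. ord_abs y i)"
      using that(2) that(3,5) unfolding H_set_def by auto
    moreover have "(\<Sum>i=s+1..r. lam i) < (\<Sum>i=s+1..r. ord_abs y i)"
      using that(1) that(3,5) unfolding H_set_def by auto
    ultimately show False by simp
  qed
  show ?thesis using *[OF assms] *[OF assms(2,1,4,3)] by (cases "s < r"; cases "r < s") auto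
qed

lemma D_set:
  fixes U :: "real^'n"
  assumes D: "\<And>d. U \<bullet> d \<le> slope_pen lam d"
  shows "(\<Sum>j\<in>B. \<bar>U $ j\<bar>) \<le> (\<Sum>i=1..card B. lam i)"
proof -
  define b :: "real^'n" where "b = (\<chi> j. if j \<in> B then (if 0 \<le> U $ j then 1 else -1) else 0)"
  have "U \<bullet> b = (\<Sum>j\<in>UNIV. if j \<in> B then \<bar>U $ j\<bar> else 0)"
    unfolding inner_vec_def b_def by (intro sum.cong) auto
  also have "\<dots> = (\<Sum>j\<in>B. \<bar>U $ j\<bar>)" by (simp add: sum.If_cases)
  finally have ub: "U \<bullet> b = (\<Sum>j\<in>B. \<bar>U $ j\<bar>)" .
  obtain \<sigma> where s: "sorts \<sigma> b" using sorts_exists by blast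
  have absb: "\<And>j. \<bar>b $ j\<bar> = (if j \<in> B then 1 else 0)" by (simp add: b_def)
  have "slope_pen lam b = (\<Sum>i=1..CARD('n). lam i * \<bar>b $ \<sigma> i\<bar>)" by (rule slope_pen_sorts[OF s])
  also have "\<dots> = (\<Sum>i\<in>{1..CARD('n)}. if 1/2 < \<bar>b $ \<sigma> i\<bar> then lam i else 0)"
    by (intro sum.cong) (auto simp: absb)
  also have "\<dots> = (\<Sum>i\<in>{i\<in>{1..CARD('n)}. 1/2 < \<bar>b $ \<sigma> i\<bar>}. lam i)"
    by (rule sum.inter_filter[symmetric]) simp
  also have "\<dots> = (\<Sum>i=1..card {j. 1/2 < \<bar>b $ j\<bar>}. lam i)" by (simp only: sorts_level[OF s])
  also have "{j. 1/2 < \<bar>b $ j\<bar>} = B" by (auto simp: absb)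
  finally show ?thesis using D[of b] ub by simp
qed


lemma core:
  fixes U bh :: "real^'n"
  assumes mono: "\<And>i j. 1 \<le> i \<Longrightarrow> i \<le> j \<Longrightarrow> j \<le> CARD('n) \<Longrightarrow> lam j \<le> lam i"
    and nn: "\<And>i. 1 \<le> i \<Longrightarrow> i \<le> CARD('n) \<Longrightarrow> 0 \<le> lam i"
    and D: "\<And>d. U \<bullet> d \<le> slope_pen lam d"
    and E: "U \<bullet> bh = slope_pen lam bh"
    and apos: "0 < a"
    and r: "r \<in> {1..CARD('n)}"
  shows "(\<bar>(U + a *\<^sub>R bh) $ i\<bar> > lam r \<and> U + a *\<^sub>R bh \<in> H_set lam r)
          \<longleftrightarrow> (bh $ i \<noteq> 0 \<and> card {j. bh $ j \<noteq> 0} = r)"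
proof -
  define A where "A = {j. bh $ j \<noteq> 0}"
  define R where "R = card A"
  define y where "y = U + a *\<^sub>R bh"
  have DS: "\<And>B. (\<Sum>j\<in>B. \<bar>U $ j\<bar>) \<le> (\<Sum>i=1..card B. lam i)" by (rule D_set[OF D])
  show ?thesis
  proof (cases "R = 0")
    case True
    then have "A = {}" by (simp add: R_def)
    then have bh0: "bh = 0" by (auto simp: A_def vec_eq_iff)
    have "\<not> U \<in> H_set lam r"
    proof
      assume H: "U \<in> H_set lam r"
      then have "(\<Sum>i=1..r. lam i) < (\<Sum>i=1..r. ord_abs U i)" using r unfolding H_set_def by auto
      moreover obtain \<sigma> where s: "sorts \<sigma> U" using sorts_exists by blast
      have "(\<Sum>i=1..r. ord_abs U i) = (\<Sum>i=1..r. \<bar>U $ \<sigma> i\<bar>)"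
        using r by (intro sum.cong) (auto simp: ord_abs_sorts[OF s])
      also have "\<dots> = (\<Sum>j\<in>\<sigma> ` {1..r}. \<bar>U $ j\<bar>)" using sum_first(1)[OF sorts_bij[OF s]] r by auto
      also have "\<dots> \<le> (\<Sum>i=1..r. lam i)" using DS[of "\<sigma> ` {1..r}"] sum_first(2)[OF sorts_bij[OF s]] r by auto
      ultimately show False by simp
    qed
    then show ?thesis using bh0 by simp
  next
    case False
    then have R1: "1 \<le> R" by simp
    have finA: "finite A" by simp
    have Ane: "A \<noteq> {}" using False by (auto simp: R_def)
    define s :: "real^'n" where "s = (\<chi> j. sgn (bh $ j))"
    define m where "m = Min ((\<lambda>j. \<bar>bh $ j\<bar>) ` A)"
    have mpos: "0 < m" using Ane by (auto simp: m_def A_def)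
    have mle: "\<And>j. j \<in> A \<Longrightarrow> m \<le> \<bar>bh $ j\<bar>" by (auto simp: m_def)
    define t where "t = m / 2"
    have tpos: "0 < t" using mpos by (simp add: t_def)
    have tlt: "\<And>j. j \<in> A \<Longrightarrow> t < \<bar>bh $ j\<bar>" using mle mpos by (force simp: t_def)
    define v where "v = bh - t *\<^sub>R s"
    have absv: "\<bar>v $ j\<bar> = (if j \<in> A then \<bar>bh $ j\<bar> - t else 0)" for j
    proof (cases "j \<in> A")
      case True
      then have "t < \<bar>bh $ j\<bar>" by (rule tlt)
      then show ?thesis using True by (cases "bh $ j > 0") (auto simp: v_def s_def A_def sgn_if)
    next
      case False
      then show ?thesis by (auto simp: v_def s_def A_def)
    qed
    obtain \<sigma>b where sb: "sorts \<sigma>b bh" using sorts_exists by blast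
    have sv: "sorts \<sigma>b v"
      unfolding sorts_def
    proof (intro conjI allI impI)
      show "bij_betw \<sigma>b {1..CARD('n)} UNIV" using sb by (simp add: sorts_def)
      fix i j assume h: "1 \<le> i" "i \<le> j" "j \<le> CARD('n)"
      then have le: "\<bar>bh $ \<sigma>b j\<bar> \<le> \<bar>bh $ \<sigma>b i\<bar>" using sb unfolding sorts_def by blast
      show "\<bar>v $ \<sigma>b j\<bar> \<le> \<bar>v $ \<sigma>b i\<bar>"
      proof (cases "\<sigma>b j \<in> A")
        case True
        then have "\<sigma>b i \<in> A" using le by (auto simp: A_def)
        then show ?thesis using True le by (simp add: absv)
      qed (auto simp: absv dest: tlt)
    qed
    have lev: "{i\<in>{1..CARD('n)}. 0 < \<bar>bh $ \<sigma>b i\<bar>} = {1..R}"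
      using sorts_level[OF sb, of 0] by (simp add: R_def A_def)
    have "slope_pen lam v = (\<Sum>i=1..CARD('n). lam i * \<bar>v $ \<sigma>b i\<bar>)" by (rule slope_pen_sorts[OF sv])
    also have "\<dots> = (\<Sum>i=1..CARD('n). lam i * \<bar>bh $ \<sigma>b i\<bar> - t * (if 0 < \<bar>bh $ \<sigma>b i\<bar> then lam i else 0))"
      by (intro sum.cong) (auto simp: absv A_def algebra_simps)
    also have "\<dots> = slope_pen lam bh - t * (\<Sum>i\<in>{1..CARD('n)}. if 0 < \<bar>bh $ \<sigma>b i\<bar> then lam i else 0)"
      by (simp add: slope_pen_sorts[OF sb] sum_subtractf sum_distrib_left)
    also have "(\<Sum>i\<in>{1..CARD('n)}. if 0 < \<bar>bh $ \<sigma>b i\<bar> then lam i else 0) = (\<Sum>i\<in>{i\<in>{1..CARD('n)}. 0 < \<bar>bh $ \<sigma>b i\<bar>}. lam i)"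
      by (rule sum.inter_filter[symmetric]) simp
    also have "\<dots> = (\<Sum>i=1..R. lam i)" by (simp only: lev)
    finally have Jv: "slope_pen lam v = slope_pen lam bh - t * (\<Sum>i=1..R. lam i)" .
    have "U \<bullet> v = U \<bullet> bh - t * (U \<bullet> s)" by (simp add: v_def inner_diff_right)
    then have "t * (\<Sum>i=1..R. lam i) \<le> t * (U \<bullet> s)" using D[of v] Jv E by simp
    then have Us: "(\<Sum>i=1..R. lam i) \<le> U \<bullet> s" using tpos by simp
    have "U \<bullet> s = (\<Sum>j\<in>UNIV. U $ j * sgn (bh $ j))" by (simp add: inner_vec_def s_def)
    also have "\<dots> = (\<Sum>j\<in>A. U $ j * sgn (bh $ j))"
      by (rule sum.mono_neutral_right) (auto simp: A_def)
    finally have Us2: "(\<Sum>i=1..R. lam i) \<le> (\<Sum>j\<in>A. U $ j * sgn (bh $ j))" using Us by simp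
    have tle: "\<And>j. U $ j * sgn (bh $ j) \<le> \<bar>U $ j\<bar>" by (auto simp: sgn_if)
    have SA: "(\<Sum>j\<in>A. \<bar>U $ j\<bar>) \<le> (\<Sum>i=1..R. lam i)" using DS[of A] by (simp add: R_def)
    have "(\<Sum>j\<in>A. \<bar>U $ j\<bar> - U $ j * sgn (bh $ j)) = 0"
    proof -
      have "(\<Sum>j\<in>A. \<bar>U $ j\<bar> - U $ j * sgn (bh $ j)) \<le> 0"
        using Us2 SA by (simp add: sum_subtractf)
      moreover have "0 \<le> (\<Sum>j\<in>A. \<bar>U $ j\<bar> - U $ j * sgn (bh $ j))"
        using tle by (intro sum_nonneg) simp
      ultimately show ?thesis by simp
    qed
    then have sgnU: "\<And>j. j \<in> A \<Longrightarrow> U $ j * sgn (bh $ j) = \<bar>U $ j\<bar>"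
      using tle by (subst (asm) sum_nonneg_eq_0_iff) auto
    have SAeq: "(\<Sum>j\<in>A. \<bar>U $ j\<bar>) = (\<Sum>i=1..R. lam i)"
      using SA Us2 sgnU by simp
    have yA: "\<And>j. j \<in> A \<Longrightarrow> \<bar>y $ j\<bar> = \<bar>U $ j\<bar> + a * \<bar>bh $ j\<bar>"
    proof -
      fix j assume j: "j \<in> A"
      have "U $ j * sgn (bh $ j) = \<bar>U $ j\<bar>" by (rule sgnU[OF j])
      then have sg: "U $ j * sgn (bh $ j) = \<bar>U $ j\<bar>" .
      have yj: "y $ j = U $ j + a * bh $ j" by (simp add: y_def)
      have nz: "bh $ j \<noteq> 0" using j by (simp add: A_def)
      show "\<bar>y $ j\<bar> = \<bar>U $ j\<bar> + a * \<bar>bh $ j\<bar>"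
      proof (cases "bh $ j > 0")
        case True
        then have "sgn (bh $ j) = 1" by simp
        then have "U $ j * sgn (bh $ j) = U $ j" by simp
        then have u: "U $ j = \<bar>U $ j\<bar>" using sg by linarith
        have "0 < a * bh $ j" using apos True by simp
        moreover have U0: "0 \<le> U $ j" using abs_ge_zero[of "U $ j"] u by linarith
        ultimately have y0: "0 \<le> y $ j" using yj by linarith
        have "\<bar>y $ j\<bar> = y $ j" using y0 by simp
        moreover have "\<bar>U $ j\<bar> = U $ j" using U0 by simp
        moreover have "\<bar>bh $ j\<bar> = bh $ j" using True by simp
        ultimately show ?thesis using yj by simp
      next
        case False
        then have neg: "bh $ j < 0" using nz by simp
        then have "sgn (bh $ j) = -1" by simp
        then have "U $ j * sgn (bh $ j) = - U $ j" by simp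
        then have u: "- U $ j = \<bar>U $ j\<bar>" using sg by linarith
        have "a * bh $ j < 0" using apos neg by (simp add: mult_pos_neg)
        moreover have U0: "0 \<le> - U $ j" using abs_ge_zero[of "U $ j"] u by linarith
        ultimately have y0: "y $ j \<le> 0" using yj by linarith
        have "\<bar>y $ j\<bar> = - y $ j" using y0 by simp
        moreover have "\<bar>U $ j\<bar> = - U $ j" using U0 by simp
        moreover have "\<bar>bh $ j\<bar> = - bh $ j" using neg by simp
        ultimately show ?thesis using yj by simp
      qed
    qed
    have yN: "\<And>j. j \<notin> A \<Longrightarrow> y $ j = U $ j" by (auto simp: y_def A_def)
    have LamR: "(\<Sum>i=1..R. lam i) = (\<Sum>i=1..R-1. lam i) + lam R"
      using R1 Lam_Suc[of lam "R-1"] by simp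
    have UA: "\<And>j. j \<in> A \<Longrightarrow> lam R \<le> \<bar>U $ j\<bar>"
    proof -
      fix j assume j: "j \<in> A"
      have "(\<Sum>k\<in>A - {j}. \<bar>U $ k\<bar>) \<le> (\<Sum>i=1..R-1. lam i)"
        using DS[of "A - {j}"] j by (simp add: R_def)
      moreover have "(\<Sum>k\<in>A. \<bar>U $ k\<bar>) = \<bar>U $ j\<bar> + (\<Sum>k\<in>A - {j}. \<bar>U $ k\<bar>)"
        using j by (simp add: sum.remove)
      ultimately show "lam R \<le> \<bar>U $ j\<bar>" using SAeq LamR by simp
    qed
    have UN: "\<And>j. j \<notin> A \<Longrightarrow> \<bar>U $ j\<bar> \<le> lam R"
    proof -
      fix j assume j: "j \<notin> A"
      have cj: "card (insert j A) = Suc R" using j by (simp add: R_def)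
      have "card (insert j A) \<le> CARD('n)" by (rule card_mono) auto
      then have RS: "Suc R \<le> CARD('n)" using cj by simp
      have "(\<Sum>k\<in>insert j A. \<bar>U $ k\<bar>) \<le> (\<Sum>i=1..Suc R. lam i)" using DS[of "insert j A"] cj by simp
      then have "\<bar>U $ j\<bar> \<le> lam (Suc R)" using j SAeq by (simp add: Lam_Suc)
      also have "lam (Suc R) \<le> lam R" using mono[of R "Suc R"] R1 RS by simp
      finally show "\<bar>U $ j\<bar> \<le> lam R" .
    qed
    have yset: "{j. lam R < \<bar>y $ j\<bar>} = A"
    proof
      show "{j. lam R < \<bar>y $ j\<bar>} \<subseteq> A"
      proof
        fix j assume j: "j \<in> {j. lam R < \<bar>y $ j\<bar>}"
        show "j \<in> A"
        proof (rule ccontr)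
          assume "j \<notin> A"
          then have "\<bar>y $ j\<bar> \<le> lam R" using UN yN by simp
          then show False using j by simp
        qed
      qed
      show "A \<subseteq> {j. lam R < \<bar>y $ j\<bar>}"
      proof
        fix j assume j: "j \<in> A"
        then have "0 < \<bar>bh $ j\<bar>" by (simp add: A_def)
        then have "0 < a * \<bar>bh $ j\<bar>" using apos by simp
        then show "j \<in> {j. lam R < \<bar>y $ j\<bar>}" using yA[OF j] UA[OF j] by simp
      qed
    qed
    obtain \<sigma> where sy: "sorts \<sigma> y" using sorts_exists by blast
    have bij: "bij_betw \<sigma> {1..CARD('n)} UNIV" using sy by (simp add: sorts_def)
    have RleN: "R \<le> CARD('n)" unfolding R_def by (rule card_mono) auto
    have posA: "\<And>i. 1 \<le> i \<Longrightarrow> i \<le> CARD('n) \<Longrightarrow> \<sigma> i \<in> A \<longleftrightarrow> i \<le> R"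
    proof -
      fix i assume i: "1 \<le> i" "i \<le> CARD('n)"
      have "{i\<in>{1..CARD('n)}. lam R < \<bar>y $ \<sigma> i\<bar>} = {1..R}"
        using sorts_level[OF sy, of "lam R"] by (simp only: yset R_def[symmetric])
      then have "i \<in> {i\<in>{1..CARD('n)}. lam R < \<bar>y $ \<sigma> i\<bar>} \<longleftrightarrow> i \<in> {1..R}" by (simp only:)
      then have "(lam R < \<bar>y $ \<sigma> i\<bar>) \<longleftrightarrow> i \<le> R" using i by simp
      moreover have "(lam R < \<bar>y $ \<sigma> i\<bar>) \<longleftrightarrow> \<sigma> i \<in> A" using yset by blast
      ultimately show "\<sigma> i \<in> A \<longleftrightarrow> i \<le> R" by simp
    qed
    have ordy: "\<And>i. 1 \<le> i \<Longrightarrow> i \<le> CARD('n) \<Longrightarrow> ord_abs y i = \<bar>y $ \<sigma> i\<bar>"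
      by (rule ord_abs_sorts[OF sy])
    have imR: "\<sigma> ` {1..R} = A"
    proof
      show "\<sigma> ` {1..R} \<subseteq> A" using posA RleN by auto
      show "A \<subseteq> \<sigma> ` {1..R}"
      proof
        fix j assume j: "j \<in> A"
        have "j \<in> \<sigma> ` {1..CARD('n)}" using bij by (simp add: bij_betw_def)
        then obtain i where "i \<in> {1..CARD('n)}" "j = \<sigma> i" by blast
        then show "j \<in> \<sigma> ` {1..R}" using posA j by auto
      qed
    qed
    have SU: "(\<Sum>i=1..k. \<bar>U $ \<sigma> i\<bar>) \<le> (\<Sum>i=1..k. lam i)" if k: "k \<le> CARD('n)" for k
    proof -
      have "(\<Sum>i=1..k. \<bar>U $ \<sigma> i\<bar>) = (\<Sum>j\<in>\<sigma> ` {1..k}. \<bar>U $ j\<bar>)" by (rule sum_first(1)[OF bij k])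
      also have "\<dots> \<le> (\<Sum>i=1..card (\<sigma> ` {1..k}). lam i)" by (rule DS)
      also have "card (\<sigma> ` {1..k}) = k" by (rule sum_first(2)[OF bij k])
      finally show ?thesis .
    qed
    have SUR: "(\<Sum>i=1..R. \<bar>U $ \<sigma> i\<bar>) = (\<Sum>i=1..R. lam i)"
      using sum_first(1)[OF bij RleN, of "\<lambda>j. \<bar>U $ j\<bar>"] imR SAeq by simp
    have HR: "y \<in> H_set lam R"
      unfolding H_set_def
    proof (intro CollectI conjI ballI)
      fix j assume j: "j \<in> {1..R}"
      have "(\<Sum>i=j..R. \<bar>U $ \<sigma> i\<bar>) < (\<Sum>i=j..R. \<bar>y $ \<sigma> i\<bar>)"
      proof (rule sum_strict_mono)
        fix i assume i: "i \<in> {j..R}"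
        then have "\<sigma> i \<in> A" using posA j RleN by auto
        then show "\<bar>U $ \<sigma> i\<bar> < \<bar>y $ \<sigma> i\<bar>" using yA apos by (auto simp: A_def)
      qed (use j in auto)
      moreover have "(\<Sum>i=j..R. \<bar>y $ \<sigma> i\<bar>) = (\<Sum>i=j..R. ord_abs y i)"
        using j RleN by (intro sum.cong) (auto simp: ordy)
      moreover have "(\<Sum>i=j..R. lam i) \<le> (\<Sum>i=j..R. \<bar>U $ \<sigma> i\<bar>)"
      proof -
        have j1: "1 \<le> j" "j \<le> Suc R" "j - 1 \<le> CARD('n)" using j RleN by auto
        note a1 = sum_split_nat[OF j1(1,2), of lam]
        note a2 = sum_split_nat[OF j1(1,2), of "\<lambda>i. \<bar>U $ \<sigma> i\<bar>"]
        note a3 = SU[OF j1(3)]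
        show ?thesis using a1 a2 a3 SUR by linarith
      qed
      ultimately show "(\<Sum>i=j..R. lam i) < (\<Sum>i=j..R. ord_abs y i)" by simp
    next
      fix j assume j: "j \<in> {R+1..CARD('n)}"
      have "(\<Sum>i=R+1..j. ord_abs y i) = (\<Sum>i=R+1..j. \<bar>U $ \<sigma> i\<bar>)"
        using j posA yN by (intro sum.cong) (auto simp: ordy)
      also have "\<dots> \<le> (\<Sum>i=R+1..j. lam i)"
      proof -
        have j1: "1 \<le> R+1" "R+1 \<le> Suc j" "j \<le> CARD('n)" using j by auto
        note a1 = sum_split_nat[OF j1(1,2), of lam]
        note a2 = sum_split_nat[OF j1(1,2), of "\<lambda>i. \<bar>U $ \<sigma> i\<bar>"]
        note a3 = SU[OF j1(3)]
        show ?thesis using a1 a2 a3 SUR by simp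
      qed
      finally show "(\<Sum>i=R+1..j. ord_abs y i) \<le> (\<Sum>i=R+1..j. lam i)" .
    qed
    show ?thesis
    proof
      assume h: "lam r < \<bar>(U + a *\<^sub>R bh) $ i\<bar> \<and> U + a *\<^sub>R bh \<in> H_set lam r"
      then have "r = R" using H_unique[of y lam r R] HR r R1 RleN by (auto simp: y_def)
      then show "bh $ i \<noteq> 0 \<and> card {j. bh $ j \<noteq> 0} = r"
        using h yset by (auto simp: y_def R_def A_def)
    next
      assume h: "bh $ i \<noteq> 0 \<and> card {j. bh $ j \<noteq> 0} = r"
      then have "r = R" "i \<in> A" by (auto simp: R_def A_def)
      then show "lam r < \<bar>(U + a *\<^sub>R bh) $ i\<bar> \<and> U + a *\<^sub>R bh \<in> H_set lam r"
        using HR yset by (auto simp: y_def)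
    qed
  qed
qed



lemma card_sum: "real (card {j::'n::finite. P j}) = (\<Sum>j\<in>UNIV. if P j then 1 else 0)"
  by (simp add: sum.If_cases)

lemma vec_meas:
  fixes f :: "'w \<Rightarrow> real^'n"
  assumes "f \<in> borel_measurable M"
  shows "(\<lambda>\<omega>. f \<omega> $ i) \<in> borel_measurable M"
proof -
  have "(\<lambda>x::real^'n. x $ i) \<in> borel_measurable borel"
    by (intro borel_measurable_continuous_onI continuous_intros)
  then show ?thesis using measurable_compose[OF assms] by blast
qed

lemma Ev_meas:
  fixes f :: "'w \<Rightarrow> real^'n"
  assumes "f \<in> borel_measurable M"
  shows "{\<omega>\<in>space M. f \<omega> $ i \<noteq> 0 \<and> card {j. f \<omega> $ j \<noteq> 0} = r} \<in> sets M"
proof -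
  have m: "\<And>j. (\<lambda>\<omega>. f \<omega> $ j) \<in> borel_measurable M" by (rule vec_meas[OF assms])
  have g: "(\<lambda>\<omega>. (\<Sum>j\<in>UNIV. if f \<omega> $ j \<noteq> 0 then 1 else 0 :: real)) \<in> borel_measurable M"
    using m by measurable
  have "{\<omega>\<in>space M. f \<omega> $ i \<noteq> 0 \<and> card {j. f \<omega> $ j \<noteq> 0} = r}
      = {\<omega>\<in>space M. f \<omega> $ i \<noteq> 0} \<inter> {\<omega>\<in>space M. (\<Sum>j\<in>UNIV. if f \<omega> $ j \<noteq> 0 then 1 else 0 :: real) = real r}"
    by (auto simp flip: card_sum)
  also have "\<dots> \<in> sets M"
    using m g by measurable
  finally show ?thesis .
qed



theorem corollary1:
  fixes M :: "'w measure"
    and l :: "'w \<Rightarrow> real^'n \<Rightarrow> real"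
    and gradl :: "'w \<Rightarrow> real^'n \<Rightarrow> real^'n"
    and lam :: "nat \<Rightarrow> real"
    and bhat :: "'w \<Rightarrow> real^'n"
    and b0 :: "real^'n"
    and a :: real
  assumes "prob_space M"
    and convex: "\<And>\<omega>. \<omega> \<in> space M \<Longrightarrow> convex_on UNIV (l \<omega>)"
    and grad: "\<And>\<omega> b. \<omega> \<in> space M \<Longrightarrow> (l \<omega> has_derivative (\<lambda>h. gradl \<omega> b \<bullet> h)) (at b)"
    and lam_mono: "\<And>i j. 1 \<le> i \<Longrightarrow> i \<le> j \<Longrightarrow> j \<le> CARD('n) \<Longrightarrow> lam j \<le> lam i"
    and lam_nonneg: "\<And>i. 1 \<le> i \<Longrightarrow> i \<le> CARD('n) \<Longrightarrow> 0 \<le> lam i"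
    and minimizer: "\<And>\<omega> b. \<omega> \<in> space M \<Longrightarrow>
        l \<omega> (bhat \<omega>) + slope_pen lam (bhat \<omega>) \<le> l \<omega> b + slope_pen lam b"
    and bhat_meas: "bhat \<in> borel_measurable M"
    and grad_meas: "(\<lambda>\<omega>. gradl \<omega> (bhat \<omega>)) \<in> borel_measurable M"
    and "a > 0"
  shows "(\<integral>\<omega>. real (card {j. b0 $ j = 0 \<and> bhat \<omega> $ j \<noteq> 0})
                / real (max (card {j. bhat \<omega> $ j \<noteq> 0}) 1) \<partial>M)
       = (\<Sum>r=1..CARD('n). (1 / real r) *
            (\<Sum>i\<in>{j. b0 $ j = 0}.
               measure M {\<omega> \<in> space M.
                  let T = - gradl \<omega> (bhat \<omega>) + a *\<^sub>R bhat \<omega>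
                  in \<bar>T $ i\<bar> > lam r \<and> T \<in> H_set lam r}))"
proof -
  interpret P: prob_space M by fact
  define Ev where "Ev r i = {\<omega>\<in>space M. bhat \<omega> $ i \<noteq> 0 \<and> card {j. bhat \<omega> $ j \<noteq> 0} = r}" for r i
  have Ev_sets: "Ev r i \<in> sets M" for r i unfolding Ev_def by (rule Ev_meas[OF bhat_meas])
  have key: "(let T = - gradl \<omega> (bhat \<omega>) + a *\<^sub>R bhat \<omega> in \<bar>T $ i\<bar> > lam r \<and> T \<in> H_set lam r)
      \<longleftrightarrow> (bhat \<omega> $ i \<noteq> 0 \<and> card {j. bhat \<omega> $ j \<noteq> 0} = r)"
    if \<omega>: "\<omega> \<in> space M" and r: "r \<in> {1..CARD('n)}" for \<omega> r i
  proof -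
    define b where "b = bhat \<omega>"
    define g where "g = gradl \<omega> b"
    define J :: "real^'n \<Rightarrow> real" where "J = slope_pen lam"
    have gd: "(l \<omega> has_derivative (\<lambda>h. g \<bullet> h)) (at b)" unfolding g_def by (rule grad[OF \<omega>])
    have min: "\<And>x. l \<omega> b + J b \<le> l \<omega> x + J x" unfolding b_def J_def by (rule minimizer[OF \<omega>])
    have Dd: "(- g) \<bullet> d \<le> J d" for d
    proof -
      have "- (g \<bullet> d) \<le> J d"
      proof (rule first_order[OF gd])
        fix t :: real assume t: "0 < t" "t < 1"
        have "J (b + t *\<^sub>R d) \<le> J b + J (t *\<^sub>R d)" unfolding J_def by (rule J_add[OF lam_mono lam_nonneg])
        also have "J (t *\<^sub>R d) = t * J d" unfolding J_def using t by (simp add: J_scale)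
        finally show "l \<omega> b - l \<omega> (b + t *\<^sub>R d) \<le> t * J d" using min[of "b + t *\<^sub>R d"] by simp
      qed
      then show ?thesis by simp
    qed
    have Ee: "(- g) \<bullet> b = J b"
    proof -
      have "- (g \<bullet> (- b)) \<le> - J b"
      proof (rule first_order[OF gd])
        fix t :: real assume t: "0 < t" "t < 1"
        have "b + t *\<^sub>R (- b) = (1 - t) *\<^sub>R b" by (simp add: algebra_simps)
        then have "J (b + t *\<^sub>R (- b)) = (1 - t) * J b" unfolding J_def using t by (simp add: J_scale)
        then show "l \<omega> b - l \<omega> (b + t *\<^sub>R (- b)) \<le> t * (- J b)"
          using min[of "b + t *\<^sub>R (- b)"] by (simp add: algebra_simps)
      qed
      then have "J b \<le> (- g) \<bullet> b" by simp
      moreover have "(- g) \<bullet> b \<le> J b" by (rule Dd)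
      ultimately show ?thesis by simp
    qed
    have "(\<bar>(- g + a *\<^sub>R b) $ i\<bar> > lam r \<and> - g + a *\<^sub>R b \<in> H_set lam r)
          \<longleftrightarrow> (b $ i \<noteq> 0 \<and> card {j. b $ j \<noteq> 0} = r)"
      by (rule core[OF lam_mono lam_nonneg Dd[unfolded J_def] Ee[unfolded J_def] \<open>a > 0\<close> r])
    then show ?thesis by (simp add: Let_def b_def g_def)
  qed
  have sets_eq: "{\<omega> \<in> space M. let T = - gradl \<omega> (bhat \<omega>) + a *\<^sub>R bhat \<omega>
                  in \<bar>T $ i\<bar> > lam r \<and> T \<in> H_set lam r} = Ev r i"
    if r: "r \<in> {1..CARD('n)}" for r i
    unfolding Ev_def using key[OF _ r] by blast
  have int: "integrable M (indicator (Ev r i) :: 'w \<Rightarrow> real)" for r i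
    using Ev_sets[of r i] by (simp add: integrable_indicator_iff less_top[symmetric])
  have "(\<Sum>r=1..CARD('n). (1 / real r) *
            (\<Sum>i\<in>{j. b0 $ j = 0}.
               measure M {\<omega> \<in> space M.
                  let T = - gradl \<omega> (bhat \<omega>) + a *\<^sub>R bhat \<omega>
                  in \<bar>T $ i\<bar> > lam r \<and> T \<in> H_set lam r}))
      = (\<Sum>r=1..CARD('n). (1 / real r) * (\<Sum>i\<in>{j. b0 $ j = 0}. integral\<^sup>L M (indicator (Ev r i))))"
  proof (intro sum.cong refl arg_cong2[where f="(*)"])
    fix r i assume r: "r \<in> {1..CARD('n)}"
    have "Ev r i \<inter> space M = Ev r i" by (auto simp: Ev_def)
    then show "measure M {\<omega> \<in> space M.
                  let T = - gradl \<omega> (bhat \<omega>) + a *\<^sub>R bhat \<omega>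
                  in \<bar>T $ i\<bar> > lam r \<and> T \<in> H_set lam r} = integral\<^sup>L M (indicator (Ev r i))"
      by (simp only: sets_eq[OF r] integral_indicator) simp
  qed
  also have "\<dots> = integral\<^sup>L M (\<lambda>\<omega>. \<Sum>r=1..CARD('n). (1 / real r) * (\<Sum>i\<in>{j. b0 $ j = 0}. indicator (Ev r i) \<omega>))"
    using int by (simp add: integral_sum integral_mult_right_zero)
  also have "\<dots> = (\<integral>\<omega>. real (card {j. b0 $ j = 0 \<and> bhat \<omega> $ j \<noteq> 0})
                / real (max (card {j. bhat \<omega> $ j \<noteq> 0}) 1) \<partial>M)"
  proof (rule Bochner_Integration.integral_cong[OF refl])
    fix \<omega> assume \<omega>: "\<omega> \<in> space M"
    define R where "R = card {j. bhat \<omega> $ j \<noteq> 0}"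
    define V where "V = card {j. b0 $ j = 0 \<and> bhat \<omega> $ j \<noteq> 0}"
    have inner: "(\<Sum>i\<in>{j. b0 $ j = 0}. indicator (Ev r i) \<omega> :: real) = (if R = r then real V else 0)" for r
    proof -
      have "(\<Sum>i\<in>{j. b0 $ j = 0}. indicator (Ev r i) \<omega> :: real)
          = (\<Sum>i\<in>{j. b0 $ j = 0}. if bhat \<omega> $ i \<noteq> 0 \<and> R = r then 1 else 0)"
        using \<omega> by (intro sum.cong) (auto simp: Ev_def R_def indicator_def)
      also have "\<dots> = (if R = r then real V else 0)"
        by (auto simp: sum.If_cases V_def Int_def conj_commute)
      finally show ?thesis .
    qed
    have RN: "R \<le> CARD('n)" unfolding R_def by (rule card_mono) auto
    have "(\<Sum>r=1..CARD('n). (1 / real r) * (\<Sum>i\<in>{j. b0 $ j = 0}. indicator (Ev r i) \<omega>))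
        = (\<Sum>r=1..CARD('n). if r = R then real V / real R else 0)"
      by (intro sum.cong) (auto simp: inner)
    also have "\<dots> = (if R \<in> {1..CARD('n)} then real V / real R else 0)"
      by (simp add: sum.delta')
    also have "\<dots> = real V / real (max R 1)"
    proof (cases "R = 0")
      case True
      then have "{j. bhat \<omega> $ j \<noteq> 0} = {}" by (simp add: R_def)
      then have "V = 0" by (simp add: V_def)
      then show ?thesis by simp
    next
      case False
      then show ?thesis using RN by (simp add: max_def)
    qed
    finally show "(\<Sum>r=1..CARD('n). (1 / real r) * (\<Sum>i\<in>{j. b0 $ j = 0}. indicator (Ev r i) \<omega>))
        = real (card {j. b0 $ j = 0 \<and> bhat \<omega> $ j \<noteq> 0}) / real (max (card {j. bhat \<omega> $ j \<noteq> 0}) 1)"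
      by (simp add: R_def V_def)
  qed
  finally show ?thesis ..
qed


end
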